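(* For every positive integer $n$, there exists a constant $C_n\le 1$ such that $\prod_{i=1}^n x_i+C_n\in M_{2\lceil n/2\rceil}(g_1,\dots,g_n)$, where $g_i:=x_i(1-x_i)$ for $i=1,\dots,n$.
   Context: $\Sigma[\mathbf{x}]$ denotes the set of sums of squares of real polynomials in $\mathbf{x}=(x_1,\dots,x_n)$. For an integer $r$, the $r$-truncated quadratic module is $M_r(g_1,\dots,g_n):=\{\sigma_0+\sum_{i=1}^n\sigma_i g_i:\ \sigma_i\in\Sigma[\mathbf{x}],\ \deg\sigma_0\le r,\ \deg(\sigma_i g_i)\le r\}$. *)

theory Defs
  imports Complex_Main "HOL-Library.Poly_Mapping"
begin

text \<open>Real multivariate polynomials in the variables x_1, x_2, ... represented as finitely
  supported maps from monomials (exponent vectors nat =>0 nat) to real coefficients.\<close>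

type_synonym mpoly = "(nat \<Rightarrow>\<^sub>0 nat) \<Rightarrow>\<^sub>0 real"

definition Var :: "nat \<Rightarrow> mpoly" where
  "Var i = Poly_Mapping.single (Poly_Mapping.single i 1) 1"

definition Const :: "real \<Rightarrow> mpoly" where
  "Const c = Poly_Mapping.single 0 c"

text \<open>Total degree of a monomial and of a polynomial (degree of 0 is taken to be 0).\<close>

definition mdeg :: "(nat \<Rightarrow>\<^sub>0 nat) \<Rightarrow> nat" where
  "mdeg m = (\<Sum>i\<in>Poly_Mapping.keys m. Poly_Mapping.lookup m i)"

definition tdeg :: "mpoly \<Rightarrow> nat" where
  "tdeg p = Max (insert 0 (mdeg ` Poly_Mapping.keys p))"

definition in_vars :: "nat \<Rightarrow> mpoly \<Rightarrow> bool" where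
  "in_vars n p \<longleftrightarrow> (\<forall>m\<in>Poly_Mapping.keys p. Poly_Mapping.keys m \<subseteq> {1..n})"

definition SOS :: "nat \<Rightarrow> mpoly set" where
  "SOS n = {p. \<exists>qs. (\<forall>q\<in>set qs. in_vars n q) \<and> p = sum_list (map (\<lambda>q. q ^ 2) qs)}"

definition trunc_qmodule :: "nat \<Rightarrow> nat \<Rightarrow> (nat \<Rightarrow> mpoly) \<Rightarrow> mpoly set" where
  "trunc_qmodule r n g =
     {\<sigma>0 + (\<Sum>i=1..n. \<sigma> i * g i) | \<sigma>0 \<sigma>.
        \<sigma>0 \<in> SOS n \<and> tdeg \<sigma>0 \<le> r \<and>
        (\<forall>i\<in>{1..n}. \<sigma> i \<in> SOS n \<and> tdeg (\<sigma> i * g i) \<le> r)}"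

end

theory Submission
  imports Defs
begin

definition PD :: "nat \<Rightarrow> nat \<Rightarrow> mpoly \<Rightarrow> bool" where
  "PD n d p \<longleftrightarrow> (\<forall>m\<in>Poly_Mapping.keys p. Poly_Mapping.keys m \<subseteq> {1..n} \<and> mdeg m \<le> d)"

lemma mdeg_add: "mdeg (a + b) = mdeg a + mdeg b"
  unfolding mdeg_def
  by (rule setsum_keys_plus_distrib[where f="\<lambda>k v. v"]) auto

lemma mdeg_zero[simp]: "mdeg 0 = 0" by (simp add: mdeg_def)

lemma mdeg_single1[simp]: "mdeg (Poly_Mapping.single i 1) = 1"
  by (simp add: mdeg_def)

lemma PD_mono: "PD n d p \<Longrightarrow> d \<le> e \<Longrightarrow> PD n e p"
  unfolding PD_def by force

lemma PD_add: "PD n d p \<Longrightarrow> PD n d q \<Longrightarrow> PD n d (p + q)"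
  unfolding PD_def using keys_add[of p q] by blast

lemma PD_uminus: "PD n d p \<Longrightarrow> PD n d (- p)"
  unfolding PD_def by simp

lemma PD_diff: "PD n d p \<Longrightarrow> PD n d q \<Longrightarrow> PD n d (p - q)"
  unfolding PD_def using keys_diff[of p q] by blast

lemma PD_mult: "PD n d p \<Longrightarrow> PD n e q \<Longrightarrow> PD n (d + e) (p * q)"
proof -
  assume a: "PD n d p" "PD n e q"
  show ?thesis unfolding PD_def
  proof
    fix m assume "m \<in> Poly_Mapping.keys (p * q)"
    then obtain x y where m: "m = x + y" "x \<in> Poly_Mapping.keys p" "y \<in> Poly_Mapping.keys q"
      using keys_mult[of p q] by blast
    show "Poly_Mapping.keys m \<subseteq> {1..n} \<and> mdeg m \<le> d + e"
    proof
      have "Poly_Mapping.keys x \<subseteq> {1..n}" "Poly_Mapping.keys y \<subseteq> {1..n}"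
        using a m unfolding PD_def by auto
      then show "Poly_Mapping.keys m \<subseteq> {1..n}" using m keys_add[of x y] by blast
      show "mdeg m \<le> d + e" using a m unfolding PD_def by (auto simp: mdeg_add add_mono)
    qed
  qed
qed

lemma PD_Const: "PD n 0 (Const c)"
  unfolding PD_def Const_def by simp

lemma PD_one: "PD n 0 1"
  unfolding PD_def by simp

lemma PD_Var: "i \<in> {1..n} \<Longrightarrow> PD n 1 (Var i)"
  unfolding PD_def Var_def using mdeg_single1[of i] by simp

lemma PD_Var': "1 \<le> i \<Longrightarrow> i \<le> n \<Longrightarrow> PD n (Suc 0) (Var i)"
  using PD_Var[of i n] by simp

lemma PD_prod: "finite A \<Longrightarrow> (\<And>i. i \<in> A \<Longrightarrow> PD n 1 (f i)) \<Longrightarrow> PD n (card A) (\<Prod>i\<in>A. f i)"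
proof (induction A rule: finite_induct)
  case empty then show ?case by (simp add: PD_one)
next
  case (insert x F)
  then show ?case using PD_mult[of n 1 "f x" "card F" "prod f F"] by simp
qed

lemma PD_tdeg: "PD n d p \<Longrightarrow> tdeg p \<le> d"
  unfolding PD_def tdeg_def by (auto intro!: Max.boundedI)

lemma PD_in_vars: "PD n d p \<Longrightarrow> in_vars n p"
  unfolding PD_def in_vars_def by blast

lemma SOS_list: "(\<And>q. q \<in> set qs \<Longrightarrow> PD n d q) \<Longrightarrow>
   sum_list (map (\<lambda>q. q ^ 2) qs) \<in> SOS n \<and> PD n (2*d) (sum_list (map (\<lambda>q. q ^ 2) qs))"
proof -
  assume a: "\<And>q. q \<in> set qs \<Longrightarrow> PD n d q"
  have "PD n (2*d) (sum_list (map (\<lambda>q. q ^ 2) qs))"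
    using a
  proof (induction qs)
    case Nil then show ?case by (simp add: PD_def)
  next
    case (Cons q qs)
    have "PD n (d+d) (q*q)" using Cons.prems by (intro PD_mult) auto
    then have "PD n (2*d) (q^2)" by (simp add: power2_eq_square mult_2)
    then show ?case using Cons by (auto intro: PD_add)
  qed
  moreover have "sum_list (map (\<lambda>q. q ^ 2) qs) \<in> SOS n"
    unfolding SOS_def using a PD_in_vars by blast
  ultimately show ?thesis by blast
qed

lemma tele:
  fixes f :: "nat \<Rightarrow> 'a::comm_ring_1"
  assumes "s \<le> b"
  shows "1 - (\<Prod>i\<in>{s..<b}. f i)^2 =
     (\<Sum>j\<in>{s..<b}. (\<Prod>i\<in>{s..<j}. f i)^2 * (1 - f j)^2)
     + 2 * (\<Sum>j\<in>{s..<b}. (\<Prod>i\<in>{s..<j}. f i)^2 * (f j * (1 - f j)))"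
  using assms
proof (induction b rule: dec_induct)
  case base then show ?case by simp
next
  case (step b)
  let ?p = "\<Prod>i\<in>{s..<b}. f i"
  have e: "1 - (?p * f b)^2 = (1 - ?p^2) + (?p^2 * (1 - f b)^2 + 2 * (?p^2 * (f b * (1 - f b))))"
    by (simp add: algebra_simps power2_eq_square)
  have p: "(\<Prod>i\<in>{s..<Suc b}. f i) = ?p * f b"
    using step.hyps by (simp add: prod.atLeastLessThan_Suc)
  have s1: "\<And>g. (\<Sum>j\<in>{s..<Suc b}. g j) = (\<Sum>j\<in>{s..<b}. g j) + g b"
    using step.hyps by (simp add: sum.atLeastLessThan_Suc)
  show ?case unfolding p s1 e step.IH by (simp add: algebra_simps)
qed

lemma ident:
  fixes f :: "nat \<Rightarrow> 'a::comm_ring_1" and c h :: 'a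
  assumes ch: "c * c = h" and hh: "h + h = 1" and kn: "k \<le> n"
  defines "s \<equiv> \<lambda>j. if j \<le> k then 1 else k + 1"
  defines "pre \<equiv> \<lambda>j. \<Prod>i\<in>{s j..<j}. f i"
  shows "(\<Prod>i=1..n. f i) + 1 =
    sum_list (map (\<lambda>q. q^2) (c * ((\<Prod>i\<in>{1..<k+1}. f i) + (\<Prod>i\<in>{k+1..<n+1}. f i))
       # map (\<lambda>j. c * pre j * (1 - f j)) [1..<n+1]))
    + (\<Sum>j=1..n. pre j ^ 2 * (f j * (1 - f j)))"
proof -
  define u where "u = (\<Prod>i\<in>{1..<k+1}. f i)"
  define v where "v = (\<Prod>i\<in>{k+1..<n+1}. f i)"
  define A1 where "A1 = (\<Sum>j\<in>{1..<k+1}. (\<Prod>i\<in>{1..<j}. f i)^2 * (1 - f j)^2)"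
  define B1 where "B1 = (\<Sum>j\<in>{1..<k+1}. (\<Prod>i\<in>{1..<j}. f i)^2 * (f j * (1 - f j)))"
  define A2 where "A2 = (\<Sum>j\<in>{k+1..<n+1}. (\<Prod>i\<in>{k+1..<j}. f i)^2 * (1 - f j)^2)"
  define B2 where "B2 = (\<Sum>j\<in>{k+1..<n+1}. (\<Prod>i\<in>{k+1..<j}. f i)^2 * (f j * (1 - f j)))"
  have U: "1 - u^2 = A1 + 2 * B1" unfolding u_def A1_def B1_def by (rule tele) simp
  have V: "1 - v^2 = A2 + 2 * B2" unfolding v_def A2_def B2_def by (rule tele) (use kn in simp)
  have P: "(\<Prod>i=1..n. f i) = u * v"
    unfolding u_def v_def using kn prod.atLeastLessThan_concat[of 1 "k+1" "n+1" f]
    by (simp add: atLeastLessThanSuc_atLeastAtMost[symmetric])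
  have split: "\<And>g :: nat \<Rightarrow> 'a. sum g {1..<n+1} = sum g {1..<k+1} + sum g {k+1..<n+1}"
    using kn by (intro sum.atLeastLessThan_concat[symmetric]) simp_all
  have S1: "(\<Sum>j\<in>{1..<n+1}. (c * pre j * (1 - f j))^2) = h * (A1 + A2)"
  proof -
    have "(\<Sum>j\<in>{1..<n+1}. (c * pre j * (1 - f j))^2) = h * (\<Sum>j\<in>{1..<n+1}. pre j ^2 * (1 - f j)^2)"
      by (simp add: sum_distrib_left power_mult_distrib power2_eq_square ch[symmetric] algebra_simps)
    also have "(\<Sum>j\<in>{1..<n+1}. pre j ^2 * (1 - f j)^2) = A1 + A2"
      unfolding split A1_def A2_def
      by (intro arg_cong2[where f="(+)"] sum.cong) (auto simp: pre_def s_def)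
    finally show ?thesis .
  qed
  have S2: "(\<Sum>j=1..n. pre j ^ 2 * (f j * (1 - f j))) = B1 + B2"
    unfolding atLeastLessThanSuc_atLeastAtMost[symmetric] Suc_eq_plus1 split B1_def B2_def
    by (intro arg_cong2[where f="(+)"] sum.cong) (auto simp: pre_def s_def)
  have L: "sum_list (map (\<lambda>q. q^2) (c * (u + v) # map (\<lambda>j. c * pre j * (1 - f j)) [1..<n+1]))
     = h * (u + v)^2 + h * (A1 + A2)"
  proof -
    have "sum_list (map (\<lambda>q. q^2) (c * (u + v) # map (\<lambda>j. c * pre j * (1 - f j)) [1..<n+1]))
       = (c*(u+v))^2 + (\<Sum>j\<in>{1..<n+1}. (c * pre j * (1 - f j))^2)"
      by (simp only: list.map sum_list.Cons map_map o_def interv_sum_list_conv_sum_set_nat set_upt)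
    also have "(c*(u+v))^2 = h * (u+v)^2" by (simp add: power_mult_distrib power2_eq_square ch[symmetric])
    finally show ?thesis unfolding S1 .
  qed
  have two: "h * 2 = 1" using hh by (simp add: mult_2_right)
  have "u * v + 1 = h * 2 * (u * v + 1)" by (simp add: two)
  also have "\<dots> = h * ((u+v)^2 + (1 - u^2) + (1 - v^2))" by (simp add: algebra_simps power2_eq_square)
  also have "\<dots> = h * (u + v)^2 + h * (A1 + A2) + (h * 2) * (B1 + B2)"
    unfolding U V by (simp add: algebra_simps)
  finally have "u * v + 1 = h * (u + v)^2 + h * (A1 + A2) + (B1 + B2)" by (simp add: two)
  then show ?thesis using P L S2 unfolding u_def[symmetric] v_def[symmetric] by simp
qed

lemma PD_pre:
  assumes "j \<in> {1..n}" "k \<le> n" "n \<le> 2*k"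
  shows "PD n (j - (if j \<le> k then 1 else k + 1)) (\<Prod>i\<in>{(if j \<le> k then 1 else k + 1)..<j}. Var i)"
    and "j - (if j \<le> k then 1 else k + 1) + 1 \<le> k"
proof -
  show "PD n (j - (if j \<le> k then 1 else k + 1)) (\<Prod>i\<in>{(if j \<le> k then 1 else k + 1)..<j}. Var i)"
  proof -
    have "PD n (card {(if j \<le> k then 1 else k + 1)..<j}) (\<Prod>i\<in>{(if j \<le> k then 1 else k + 1)..<j}. Var i)"
      by (rule PD_prod) (use assms in \<open>auto intro!: PD_Var' split: if_splits\<close>)
    then show ?thesis by simp
  qed
  show "j - (if j \<le> k then 1 else k + 1) + 1 \<le> k" using assms by auto
qed

theorem lemma2:
  fixes n :: nat
  assumes "n \<ge> 1"
  shows "\<exists>C::real. C \<le> 1 \<and>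
           (\<Prod>i=1..n. Var i) + Const C
             \<in> trunc_qmodule (2 * nat \<lceil>real n / 2\<rceil>) n (\<lambda>i. Var i * (1 - Var i))"
proof (intro exI conjI)
  define k where "k = nat \<lceil>real n / 2\<rceil>"
  have k1: "real n / 2 \<le> real k" unfolding k_def by linarith
  have k2: "real k < real n / 2 + 1" unfolding k_def by linarith
  have kn: "k \<le> n" using k2 assms by linarith
  have nk: "n \<le> 2 * k" using k1 by linarith
  define c where "c = Const (sqrt (1/2))"
  define h where "h = Const (1/2)"
  have ch: "c * c = h" unfolding c_def h_def Const_def by (simp add: mult_single)
  have hh: "h + h = 1" unfolding h_def Const_def by (simp add: single_add[symmetric])
  have C1: "Const 1 = 1" unfolding Const_def by simp
  define s where "s \<equiv> \<lambda>j::nat. if j \<le> k then 1 else k + 1"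
  define pre where "pre \<equiv> \<lambda>j. \<Prod>i\<in>{s j..<j}. Var i"
  define qs where "qs = c * ((\<Prod>i\<in>{1..<k+1}. Var i) + (\<Prod>i\<in>{k+1..<n+1}. Var i))
       # map (\<lambda>j. c * pre j * (1 - Var j)) [1..<n+1]"
  define \<sigma>0 where "\<sigma>0 = sum_list (map (\<lambda>q. q^2) qs)"
  define \<sigma> where "\<sigma> = (\<lambda>j. sum_list (map (\<lambda>q. q^2) [pre j]))"
  have eq: "(\<Prod>i=1..n. Var i) + Const 1 = \<sigma>0 + (\<Sum>j=1..n. \<sigma> j * (Var j * (1 - Var j)))"
    unfolding C1 \<sigma>0_def \<sigma>_def qs_def pre_def s_def using ident[OF ch hh kn, of Var] by simp
  have PDpre: "\<And>j. j \<in> {1..n} \<Longrightarrow> PD n (j - s j) (pre j) \<and> j - s j + 1 \<le> k"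
    unfolding pre_def s_def using PD_pre[OF _ kn nk] by blast
  have qsPD: "\<And>q. q \<in> set qs \<Longrightarrow> PD n k q"
  proof -
    fix q assume "q \<in> set qs"
    then have "q = c * ((\<Prod>i\<in>{1..<k+1}. Var i) + (\<Prod>i\<in>{k+1..<n+1}. Var i))
      \<or> (\<exists>j\<in>{1..n}. q = c * pre j * (1 - Var j))" unfolding qs_def by auto
    then show "PD n k q"
    proof (elim disjE bexE)
      assume 1: "q = c * ((\<Prod>i\<in>{1..<k+1}. Var i) + (\<Prod>i\<in>{k+1..<n+1}. Var i))"
      have u: "PD n k (\<Prod>i\<in>{1..<k+1}. Var i)"
        using PD_prod[of "{1..<k+1}" n Var] kn by (simp add: PD_Var')
      have v: "PD n k (\<Prod>i\<in>{k+1..<n+1}. Var i)"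
        using PD_prod[of "{k+1..<n+1}" n Var] nk PD_mono[of n "n-k" _ k] by (simp add: PD_Var')
      show ?thesis unfolding 1 c_def using PD_mult[OF PD_Const PD_add[OF u v]] by simp
    next
      fix j assume j: "j \<in> {1..n}" and q: "q = c * pre j * (1 - Var j)"
      note 2 = j q
      have "PD n (0 + (j - s j) + 1) q" unfolding q c_def
        using 2(1) PDpre[OF 2(1)]
        by (intro PD_mult PD_Const PD_diff PD_one PD_Var PD_mono[of n 0 1]) auto
      then show ?thesis using PDpre[OF 2(1)] PD_mono by auto
    qed
  qed
  show "(1::real) \<le> 1" by simp
  show "(\<Prod>i=1..n. Var i) + Const 1 \<in> trunc_qmodule (2 * nat \<lceil>real n / 2\<rceil>) n (\<lambda>i. Var i * (1 - Var i))"
    unfolding trunc_qmodule_def k_def[symmetric]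
  proof (intro CollectI exI conjI ballI)
    show "(\<Prod>i=1..n. Var i) + Const 1 = \<sigma>0 + (\<Sum>j=1..n. \<sigma> j * (Var j * (1 - Var j)))" by (rule eq)
    show "\<sigma>0 \<in> SOS n" unfolding \<sigma>0_def using SOS_list[OF qsPD] by blast
    show "tdeg \<sigma>0 \<le> 2 * k" unfolding \<sigma>0_def using SOS_list[OF qsPD] PD_tdeg by blast
    fix j assume j: "j \<in> {1..n}"
    show "\<sigma> j \<in> SOS n" unfolding \<sigma>_def using SOS_list[of "[pre j]" n "j - s j"] PDpre[OF j] by auto
    have "PD n (2 * (j - s j)) (\<sigma> j)" unfolding \<sigma>_def using SOS_list[of "[pre j]" n "j - s j"] PDpre[OF j] by auto
    then have "PD n (2 * (j - s j) + (1 + 1)) (\<sigma> j * (Var j * (1 - Var j)))"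
      using j by (intro PD_mult PD_diff PD_Var PD_mono[OF PD_one]) auto
    then have "PD n (2 * k) (\<sigma> j * (Var j * (1 - Var j)))" using PDpre[OF j] PD_mono by fastforce
    then show "tdeg (\<sigma> j * (Var j * (1 - Var j))) \<le> 2 * k" by (rule PD_tdeg)
  qed
qed

end
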